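(* Let $\mathfrak T=(\mathcal X,\mathcal Y)$ be a nice couple and $(Q,G)$ a PMQ-group pair with $Q$ augmented. Then $\mathrm{Hur}(\mathfrak T;Q_+,G)$ is a closed subspace of $\mathrm{Hur}(\mathfrak T;Q,G)$.
   Context: Conventions: $*:=-\sqrt{-1}\in\mathbb C$; $\mathbb H=\{z\in\mathbb C:\operatorname{Im}z\ge0\}$. A subset of $\mathbb C$ is semi-algebraic if it is a finite union of sets each defined by finitely many real polynomial equalities and (weak or strict) inequalities in $\operatorname{Re}z,\operatorname{Im}z$. A nice couple is a pair $(\mathcal X,\mathcal Y)$ of semi-algebraic sets $\mathcal Y\subseteq\mathcal X\subseteq\mathbb H$ with $\mathcal Y$ closed in $\mathcal X$. PMQs: a partially multiplicative quandle (PMQ) is a set $Q$ with an element $\mathbb 1$, an everywhere defined conjugation $(a,b)\mapsto a^b$ and a product $(a,b)\mapsto ab$ defined on $D\subseteq Q\times Q$, such that: (i) $a^a=a$, each $(-)^b$ is bijective, $(a^b)^c=(a^c)^{b^c}$; (ii) $a^{\mathbb 1}=a$, $\mathbb 1^a=\mathbb 1$; (iii) $(a,\mathbb1),(\mathbb1,a)\in D$, $a\mathbb1=\mathbb1a=a$; (iv) if $(a,b),(ab,c)\in D$ then $(b,c),(a,bc)\in D$ and $(ab)c=a(bc)$, and symmetrically; (v) if $(a,b)\in D$ then $(a^c,b^c)\in D$, $(ab)^c=a^cb^c$, $c^{ab}=(c^a)^b$, and $(b,a^b)\in D$ with $ab=b\,a^b$. $Q$ is augmented if $ab=\mathbb1$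 (with $(a,b)\in D$) implies $a=b=\mathbb1$; $Q_+:=Q\setminus\{\mathbb1\}$. A PMQ-group pair $(Q,G)$ is a PMQ $Q$, a group $G$ (a PMQ with full product and $g^h=h^{-1}gh$), a PMQ morphism $\mathfrak e:Q\to G$ and a right action $a\mapsto a^g$ of $G$ on $Q$ by PMQ automorphisms with $a^{\mathfrak e(b)}=a^b$ and $\mathfrak e(a^g)=g^{-1}\mathfrak e(a)g$. Configurations: for finite $P\subset\mathcal X$, $\mathfrak G(P)=\pi_1(\mathbb C\setminus P,* )$; $\mathfrak Q(P)$ is $\{\mathbb1\}$ with the conjugacy classes of small clockwise simple loops around single points of $P\setminus\mathcal Y$; $\mathfrak Q^{\mathrm{ext}}(P)$ is the union of conjugacy classes of clockwise simple closed curves in $\mathbb C\setminus(P\cup\mathcal Y)$ bounding a disc in $\mathbb C\setminus\mathcal Y$; each of its elements $g$ is a product $g_1\cdots g_r$ of elements of $\mathfrak Q(P)$, and $\psi$ extends over $g$ if $\psi(g_1)\cdots\psi(g_r)$ is defined in $Q$ (value $\psi^{\mathrm{ext}}(g)$, independent of choices). Hurwitz space: $\mathrm{Hur}(\mathfrak T;Q,G)$ is the set of triples $(P,\psi,\phi)$, $P\subset\mathcal X$ finite, $\phi:\mathfrak G(P)\to G$ a homomorphism, $\psi:\mathfrak Q(P)\to Q$ with $\psi(\mathbb1)=\mathbb1$, $\mathfrak e\circ\psi=\phi|_{\mathfrak Q(P)}$, $\psi(h^{-1}xh)=\psi(x)^{\phi(h)}$. Its topology has as basis the normal neighbourhoods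 $\mathfrak U(\mathfrak c;\underline U)$: for $\mathfrak c=(P,\psi,\phi)$, $P=\{z_1,\dots,z_k\}$, and an adapted covering $\underline U=(U_1,\dots,U_k)$ (convex semi-algebraic open subsets of $\mathbb C\setminus\{*\}$ with compact pairwise disjoint closures not containing $*$, $U_i\cap P=\{z_i\}$, $\overline{U_i}\cap\mathcal Y=\emptyset$ when $z_i\notin\mathcal Y$), it is the set of $(P',\psi',\phi')$ with $P'\subset\bigcup U_i$ meeting each $U_i$, $\psi'$ extending over every clockwise simple closed curve class which up to free homotopy lies in some $U_i\setminus P'$ with $\overline{U_i}\cap\mathcal Y=\emptyset$, $\phi'\circ\iota=\phi$ and $(\psi')^{\mathrm{ext}}\circ\iota=\psi$ on $\mathfrak Q(P)$, where $\iota:\mathfrak G(P)\cong\pi_1(\mathbb C\setminus\bigcup U_i,* )\to\mathfrak G(P')$ is induced by inclusions. For augmented $Q$, $\mathrm{Hur}(\mathfrak T;Q_+,G)\subseteq\mathrm{Hur}(\mathfrak T;Q,G)$ is the subspace of configurations $(P,\psi,\phi)$ with $\psi^{-1}(\mathbb1)=\{\mathbb1\}$. *)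

theory Defs
  imports "HOL-Complex_Analysis.Complex_Analysis" "HOL-Algebra.Group" "HOL-Library.FuncSet"
begin

definition basept :: complex where "basept = - \<i>"

definition upper_half :: "complex set" where "upper_half = {z. Im z \<ge> 0}"

text \<open>Real polynomials in Re z, Im z, rendered as finite sums of monomials.\<close>
definition poly2 :: "(complex \<Rightarrow> real) set" where
  "poly2 = {f. \<exists>n (c::nat \<Rightarrow> nat \<Rightarrow> real). \<forall>z. f z = (\<Sum>i<n. \<Sum>j<n. c i j * Re z ^ i * Im z ^ j)}"

definition basic_semialg :: "complex set \<Rightarrow> bool" where
  "basic_semialg S \<longleftrightarrow> (\<exists>E W T. finite E \<and> finite W \<and> finite T \<and>
      E \<subseteq> poly2 \<and> W \<subseteq> poly2 \<and> T \<subseteq> poly2 \<and>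
      S = {z. (\<forall>f\<in>E. f z = 0) \<and> (\<forall>f\<in>W. f z \<ge> 0) \<and> (\<forall>f\<in>T. f z > 0)})"

definition semialgebraic :: "complex set \<Rightarrow> bool" where
  "semialgebraic S \<longleftrightarrow> (\<exists>F. finite F \<and> (\<forall>B\<in>F. basic_semialg B) \<and> S = \<Union>F)"

definition nice_couple :: "complex set \<Rightarrow> complex set \<Rightarrow> bool" where
  "nice_couple X Y \<longleftrightarrow> semialgebraic X \<and> semialgebraic Y \<and> Y \<subseteq> X \<and> X \<subseteq> upper_half
      \<and> closedin (top_of_set X) Y"

text \<open>A PMQ with carrier Q, unit unit1, conjugation cj (a^b = cj a b) and a partial
  product pprod defined on the domain D.\<close>
definition pmq :: "'q set \<Rightarrow> 'q \<Rightarrow> ('q \<Rightarrow> 'q \<Rightarrow> 'q) \<Rightarrow> ('q \<times> 'q) set \<Rightarrow> ('q \<Rightarrow> 'q \<Rightarrow> 'q) \<Rightarrow> bool" where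
  "pmq Q unit1 cj D pprod \<longleftrightarrow>
     unit1 \<in> Q \<and> D \<subseteq> Q \<times> Q \<and>
     (\<forall>a\<in>Q. \<forall>b\<in>Q. cj a b \<in> Q) \<and>
     (\<forall>(a,b)\<in>D. pprod a b \<in> Q) \<and>
     \<comment> \<open>(i)\<close>
     (\<forall>a\<in>Q. cj a a = a) \<and>
     (\<forall>b\<in>Q. bij_betw (\<lambda>a. cj a b) Q Q) \<and>
     (\<forall>a\<in>Q. \<forall>b\<in>Q. \<forall>c\<in>Q. cj (cj a b) c = cj (cj a c) (cj b c)) \<and>
     \<comment> \<open>(ii)\<close>
     (\<forall>a\<in>Q. cj a unit1 = a \<and> cj unit1 a = unit1) \<and>
     \<comment> \<open>(iii)\<close>
     (\<forall>a\<in>Q. (a, unit1) \<in> D \<and> (unit1, a) \<in> D \<and> pprod a unit1 = a \<and> pprod unit1 a = a) \<and>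
     \<comment> \<open>(iv)\<close>
     (\<forall>a\<in>Q. \<forall>b\<in>Q. \<forall>c\<in>Q. (a,b) \<in> D \<and> (pprod a b, c) \<in> D \<longrightarrow>
          (b,c) \<in> D \<and> (a, pprod b c) \<in> D \<and> pprod (pprod a b) c = pprod a (pprod b c)) \<and>
     (\<forall>a\<in>Q. \<forall>b\<in>Q. \<forall>c\<in>Q. (b,c) \<in> D \<and> (a, pprod b c) \<in> D \<longrightarrow>
          (a,b) \<in> D \<and> (pprod a b, c) \<in> D \<and> pprod (pprod a b) c = pprod a (pprod b c)) \<and>
     \<comment> \<open>(v)\<close>
     (\<forall>a\<in>Q. \<forall>b\<in>Q. \<forall>c\<in>Q. (a,b) \<in> D \<longrightarrow>
          (cj a c, cj b c) \<in> D \<and> cj (pprod a b) c = pprod (cj a c) (cj b c) \<and>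
          cj c (pprod a b) = cj (cj c a) b \<and>
          (b, cj a b) \<in> D \<and> pprod a b = pprod b (cj a b))"

definition pmq_augmented :: "'q set \<Rightarrow> 'q \<Rightarrow> ('q \<times> 'q) set \<Rightarrow> ('q \<Rightarrow> 'q \<Rightarrow> 'q) \<Rightarrow> bool" where
  "pmq_augmented Q unit1 D pprod \<longleftrightarrow>
     (\<forall>a\<in>Q. \<forall>b\<in>Q. (a,b) \<in> D \<and> pprod a b = unit1 \<longrightarrow> a = unit1 \<and> b = unit1)"

text \<open>A PMQ-group pair (Q,G): the group G is regarded as a PMQ with full product and
  conjugation g^h = h^{-1} g h; e is a PMQ morphism; act is a right action of G on Q by
  PMQ automorphisms.\<close>
definition pmq_group_pair ::
  "'q set \<Rightarrow> 'q \<Rightarrow> ('q \<Rightarrow> 'q \<Rightarrow> 'q) \<Rightarrow> ('q \<times> 'q) set \<Rightarrow> ('q \<Rightarrow> 'q \<Rightarrow> 'q) \<Rightarrow>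
   ('g, 'm) monoid_scheme \<Rightarrow> ('q \<Rightarrow> 'g) \<Rightarrow> ('q \<Rightarrow> 'g \<Rightarrow> 'q) \<Rightarrow> bool" where
  "pmq_group_pair Q unit1 cj D pprod G e act \<longleftrightarrow>
     pmq Q unit1 cj D pprod \<and> group G \<and>
     \<comment> \<open>e is a PMQ morphism Q \<rightarrow> G\<close>
     (\<forall>a\<in>Q. e a \<in> carrier G) \<and> e unit1 = \<one>\<^bsub>G\<^esub> \<and>
     (\<forall>a\<in>Q. \<forall>b\<in>Q. e (cj a b) = inv\<^bsub>G\<^esub> (e b) \<otimes>\<^bsub>G\<^esub> e a \<otimes>\<^bsub>G\<^esub> e b) \<and>
     (\<forall>(a,b)\<in>D. e (pprod a b) = e a \<otimes>\<^bsub>G\<^esub> e b) \<and>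
     \<comment> \<open>right action of G on Q\<close>
     (\<forall>a\<in>Q. \<forall>g\<in>carrier G. act a g \<in> Q) \<and>
     (\<forall>a\<in>Q. act a \<one>\<^bsub>G\<^esub> = a) \<and>
     (\<forall>a\<in>Q. \<forall>g\<in>carrier G. \<forall>h\<in>carrier G. act (act a g) h = act a (g \<otimes>\<^bsub>G\<^esub> h)) \<and>
     \<comment> \<open>by PMQ automorphisms\<close>
     (\<forall>g\<in>carrier G. bij_betw (\<lambda>a. act a g) Q Q \<and> act unit1 g = unit1 \<and>
        (\<forall>a\<in>Q. \<forall>b\<in>Q. act (cj a b) g = cj (act a g) (act b g)) \<and>
        (\<forall>a\<in>Q. \<forall>b\<in>Q. (a,b) \<in> D \<longleftrightarrow> (act a g, act b g) \<in> D) \<and>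
        (\<forall>(a,b)\<in>D. act (pprod a b) g = pprod (act a g) (act b g))) \<and>
     \<comment> \<open>compatibility\<close>
     (\<forall>a\<in>Q. \<forall>b\<in>Q. act a (e b) = cj a b) \<and>
     (\<forall>a\<in>Q. \<forall>g\<in>carrier G. e (act a g) = inv\<^bsub>G\<^esub> g \<otimes>\<^bsub>G\<^esub> e a \<otimes>\<^bsub>G\<^esub> g)"

definition pmul :: "('q \<times> 'q) set \<Rightarrow> ('q \<Rightarrow> 'q \<Rightarrow> 'q) \<Rightarrow> 'q \<Rightarrow> 'q \<Rightarrow> 'q option" where
  "pmul D pprod a b = (if (a,b) \<in> D then Some (pprod a b) else None)"

definition pmq_listprod :: "'q \<Rightarrow> ('q \<times> 'q) set \<Rightarrow> ('q \<Rightarrow> 'q \<Rightarrow> 'q) \<Rightarrow> 'q list \<Rightarrow> 'q option" where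
  "pmq_listprod unit1 D pprod xs = foldl (\<lambda>acc a. Option.bind acc (\<lambda>x. pmul D pprod x a)) (Some unit1) xs"

type_synonym loop = "real \<Rightarrow> complex"

definition is_loop :: "complex set \<Rightarrow> loop \<Rightarrow> bool" where
  "is_loop P \<gamma> \<longleftrightarrow> path \<gamma> \<and> path_image \<gamma> \<subseteq> - P \<and> pathstart \<gamma> = basept \<and> pathfinish \<gamma> = basept"

definition lclass :: "complex set \<Rightarrow> loop \<Rightarrow> loop set" where
  "lclass P \<gamma> = {\<delta>. homotopic_paths (- P) \<gamma> \<delta>}"

text \<open>Carrier of G(P) = pi_1(C \ P, basept); product of classes is concatenation of loops.\<close>
definition fg :: "complex set \<Rightarrow> loop set set" where
  "fg P = {lclass P \<gamma> | \<gamma>. is_loop P \<gamma>}"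

definition const_loop :: loop where "const_loop = (\<lambda>t. basept)"

definition joinlist :: "loop list \<Rightarrow> loop" where
  "joinlist \<gamma>s = foldr (+++) \<gamma>s const_loop"

definition cw_scc :: "loop \<Rightarrow> bool" where
  "cw_scc \<gamma> \<longleftrightarrow> simple_path \<gamma> \<and> pathfinish \<gamma> = pathstart \<gamma> \<and>
      (\<forall>w\<in>inside (path_image \<gamma>). winding_number \<gamma> w = -1)"

text \<open>Q(P): the unit together with the conjugacy classes of small clockwise simple loops
  around single points of P \ Y (lassos: path alpha, small clockwise circle, alpha reversed).\<close>
definition QP :: "complex set \<Rightarrow> complex set \<Rightarrow> loop set set" where
  "QP Y P = {lclass P const_loop} \<union>
     {lclass P (\<alpha> +++ reversepath (circlepath z r) +++ reversepath \<alpha>) | \<alpha> z r.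
        z \<in> P - Y \<and> r > 0 \<and> cball z r \<inter> P = {z} \<and>
        path \<alpha> \<and> path_image \<alpha> \<subseteq> - P \<and> pathstart \<alpha> = basept \<and> pathfinish \<alpha> = z + of_real r}"

text \<open>Extension of psi: g = g_1 ... g_r with g_i in Q(P) and psi(g_1)...psi(g_r) defined
  in Q with value q.\<close>
definition ext_val :: "'q \<Rightarrow> ('q \<times> 'q) set \<Rightarrow> ('q \<Rightarrow> 'q \<Rightarrow> 'q) \<Rightarrow> complex set \<Rightarrow> complex set \<Rightarrow>
     (loop set \<Rightarrow> 'q) \<Rightarrow> loop set \<Rightarrow> 'q \<Rightarrow> bool" where
  "ext_val unit1 D pprod Y P \<psi> g q \<longleftrightarrow>
     (\<exists>\<gamma>s. (\<forall>\<gamma>\<in>set \<gamma>s. is_loop P \<gamma> \<and> lclass P \<gamma> \<in> QP Y P) \<and>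
           g = lclass P (joinlist \<gamma>s) \<and>
           pmq_listprod unit1 D pprod (map (\<lambda>\<gamma>. \<psi> (lclass P \<gamma>)) \<gamma>s) = Some q)"

type_synonym ('q,'g) hconf = "complex set \<times> (loop set \<Rightarrow> 'q) \<times> (loop set \<Rightarrow> 'g)"

definition Hur_set ::
  "complex set \<Rightarrow> complex set \<Rightarrow> 'q set \<Rightarrow> 'q \<Rightarrow> ('q \<Rightarrow> 'q \<Rightarrow> 'q) \<Rightarrow>
   ('g, 'm) monoid_scheme \<Rightarrow> ('q \<Rightarrow> 'g) \<Rightarrow> ('q \<Rightarrow> 'g \<Rightarrow> 'q) \<Rightarrow> ('q,'g) hconf set" where
  "Hur_set X Y Q unit1 cj G e act =
     {(P, \<psi>, \<phi>). finite P \<and> P \<subseteq> X \<and>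
        \<comment> \<open>phi : G(P) \<rightarrow> G homomorphism\<close>
        \<phi> \<in> extensional (fg P) \<and>
        (\<forall>\<gamma>. is_loop P \<gamma> \<longrightarrow> \<phi> (lclass P \<gamma>) \<in> carrier G) \<and>
        (\<forall>\<gamma> \<delta>. is_loop P \<gamma> \<and> is_loop P \<delta> \<longrightarrow>
            \<phi> (lclass P (\<gamma> +++ \<delta>)) = \<phi> (lclass P \<gamma>) \<otimes>\<^bsub>G\<^esub> \<phi> (lclass P \<delta>)) \<and>
        \<comment> \<open>psi : Q(P) \<rightarrow> Q\<close>
        \<psi> \<in> extensional (QP Y P) \<and>
        (\<forall>x\<in>QP Y P. \<psi> x \<in> Q) \<and>
        \<psi> (lclass P const_loop) = unit1 \<and>
        (\<forall>x\<in>QP Y P. e (\<psi> x) = \<phi> x) \<and>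
        (\<forall>\<gamma> \<eta>. is_loop P \<gamma> \<and> lclass P \<gamma> \<in> QP Y P \<and> is_loop P \<eta> \<longrightarrow>
            \<psi> (lclass P (reversepath \<eta> +++ \<gamma> +++ \<eta>)) = act (\<psi> (lclass P \<gamma>)) (\<phi> (lclass P \<eta>)))}"

definition adapted :: "complex set \<Rightarrow> complex set \<Rightarrow> (complex \<Rightarrow> complex set) \<Rightarrow> bool" where
  "adapted Y P U \<longleftrightarrow>
     (\<forall>z\<in>P. convex (U z) \<and> semialgebraic (U z) \<and> open (U z) \<and> basept \<notin> closure (U z) \<and>
        compact (closure (U z)) \<and> U z \<inter> P = {z} \<and>
        (z \<notin> Y \<longrightarrow> closure (U z) \<inter> Y = {})) \<and>
     (\<forall>z\<in>P. \<forall>w\<in>P. z \<noteq> w \<longrightarrow> closure (U z) \<inter> closure (U w) = {})"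

definition normal_nbhd ::
  "complex set \<Rightarrow> complex set \<Rightarrow> 'q set \<Rightarrow> 'q \<Rightarrow> ('q \<Rightarrow> 'q \<Rightarrow> 'q) \<Rightarrow> ('q \<times> 'q) set \<Rightarrow>
   ('q \<Rightarrow> 'q \<Rightarrow> 'q) \<Rightarrow> ('g, 'm) monoid_scheme \<Rightarrow> ('q \<Rightarrow> 'g) \<Rightarrow> ('q \<Rightarrow> 'g \<Rightarrow> 'q) \<Rightarrow>
   ('q,'g) hconf \<Rightarrow> (complex \<Rightarrow> complex set) \<Rightarrow> ('q,'g) hconf set" where
  "normal_nbhd X Y Q unit1 cj D pprod G e act c U =
     (case c of (P, \<psi>, \<phi>) \<Rightarrow>
      {(P', \<psi>', \<phi>') \<in> Hur_set X Y Q unit1 cj G e act.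
         P' \<subseteq> (\<Union>z\<in>P. U z) \<and> (\<forall>z\<in>P. P' \<inter> U z \<noteq> {}) \<and>
         (\<forall>z\<in>P. closure (U z) \<inter> Y = {} \<longrightarrow>
            (\<forall>\<alpha> \<gamma>. cw_scc \<gamma> \<and> path_image \<gamma> \<subseteq> U z - P' \<and>
               path \<alpha> \<and> path_image \<alpha> \<subseteq> - P' \<and> pathstart \<alpha> = basept \<and> pathfinish \<alpha> = pathstart \<gamma> \<longrightarrow>
               (\<exists>q. ext_val unit1 D pprod Y P' \<psi>' (lclass P' (\<alpha> +++ \<gamma> +++ reversepath \<alpha>)) q))) \<and>
         (\<forall>\<gamma>. is_loop P \<gamma> \<and> path_image \<gamma> \<inter> (\<Union>z\<in>P. U z) = {} \<longrightarrow>
            \<phi>' (lclass P' \<gamma>) = \<phi> (lclass P \<gamma>)) \<and>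
         (\<forall>\<gamma>. is_loop P \<gamma> \<and> path_image \<gamma> \<inter> (\<Union>z\<in>P. U z) = {} \<and> lclass P \<gamma> \<in> QP Y P \<longrightarrow>
            ext_val unit1 D pprod Y P' \<psi>' (lclass P' \<gamma>) (\<psi> (lclass P \<gamma>)))})"

definition Hur_top ::
  "complex set \<Rightarrow> complex set \<Rightarrow> 'q set \<Rightarrow> 'q \<Rightarrow> ('q \<Rightarrow> 'q \<Rightarrow> 'q) \<Rightarrow> ('q \<times> 'q) set \<Rightarrow>
   ('q \<Rightarrow> 'q \<Rightarrow> 'q) \<Rightarrow> ('g, 'm) monoid_scheme \<Rightarrow> ('q \<Rightarrow> 'g) \<Rightarrow> ('q \<Rightarrow> 'g \<Rightarrow> 'q) \<Rightarrow>
   ('q,'g) hconf topology" where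
  "Hur_top X Y Q unit1 cj D pprod G e act =
     topology_generated_by
       {normal_nbhd X Y Q unit1 cj D pprod G e act c U | c U.
          c \<in> Hur_set X Y Q unit1 cj G e act \<and> adapted Y (fst c) U}"

text \<open>Hur(T; Q_+, G): configurations with psi^{-1}(1) = {1}.\<close>
definition Hur_plus_set ::
  "complex set \<Rightarrow> complex set \<Rightarrow> 'q set \<Rightarrow> 'q \<Rightarrow> ('q \<Rightarrow> 'q \<Rightarrow> 'q) \<Rightarrow>
   ('g, 'm) monoid_scheme \<Rightarrow> ('q \<Rightarrow> 'g) \<Rightarrow> ('q \<Rightarrow> 'g \<Rightarrow> 'q) \<Rightarrow> ('q,'g) hconf set" where
  "Hur_plus_set X Y Q unit1 cj G e act =
     {(P, \<psi>, \<phi>) \<in> Hur_set X Y Q unit1 cj G e act.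
        \<forall>x\<in>QP Y P. \<psi> x = unit1 \<longrightarrow> x = lclass P const_loop}"

end

theory Submission
  imports Defs
begin

lemma semialg_ball: assumes "d > 0" shows "semialgebraic (ball (a::complex) d)"
proof -
  define c :: "nat \<Rightarrow> nat \<Rightarrow> real" where "c i j = (if i = 0 \<and> j = 0 then d^2 - Re a ^ 2 - Im a ^ 2
     else if i = 1 \<and> j = 0 then 2 * Re a else if i = 0 \<and> j = 1 then 2 * Im a
     else if i = 2 \<and> j = 0 then -1 else if i = 0 \<and> j = 2 then -1 else 0)" for i j
  define f where "f z = (\<Sum>i<3. \<Sum>j<3. c i j * Re z ^ i * Im z ^ j)" for z
  have f: "f z = d^2 - (Re z - Re a)^2 - (Im z - Im a)^2" for z
    by (simp add: f_def c_def numeral_3_eq_3 power2_eq_square algebra_simps)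
  have fp: "f \<in> poly2" unfolding poly2_def f_def by blast
  have "ball a d = {z. f z > 0}"
  proof -
    have "dist a z < d \<longleftrightarrow> f z > 0" for z
    proof -
      have e: "(dist a z)^2 = (Re z - Re a)^2 + (Im z - Im a)^2"
        by (simp add: dist_norm cmod_power2 power2_commute)
      have "dist a z < d \<longleftrightarrow> (dist a z)^2 < d^2"
      proof
        assume "dist a z < d" then show "(dist a z)^2 < d^2"
          by (intro power_strict_mono) auto
      next
        assume "(dist a z)^2 < d^2" then show "dist a z < d"
          using assms power_less_imp_less_base[of "dist a z" 2 d] by simp
      qed
      then show ?thesis unfolding f e by linarith
    qed
    then show ?thesis unfolding ball_def by blast
  qed
  then have eq: "ball a d = {z. (\<forall>g\<in>{}. g z = 0) \<and> (\<forall>g\<in>{}. g z \<ge> 0) \<and> (\<forall>g\<in>{f}. g z > 0)}"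
    by simp
  have "basic_semialg (ball a d)"
    unfolding basic_semialg_def
    by (rule exI[of _ "{}"], rule exI[of _ "{}"], rule exI[of _ "{f}"]) (use fp eq in simp)
  then show ?thesis unfolding semialgebraic_def
    by (intro exI[of _ "{ball a d}"]) simp
qed

lemma basept_notin: assumes "nice_couple X Y" "P \<subseteq> X" shows "basept \<notin> P"
  using assms by (auto simp: nice_couple_def upper_half_def basept_def)

lemma exists_adapted:
  assumes nc: "nice_couple X Y" and fin: "finite P" and PX: "P \<subseteq> X" and b: "b > 0"
  shows "\<exists>d>0. d \<le> b \<and> adapted Y P (\<lambda>z. ball z d)"
proof -
  obtain T where T: "closed T" "Y = X \<inter> T"
    using nc unfolding nice_couple_def closedin_closed by blast
  have "\<forall>z\<in>P - Y. \<exists>e>0. ball z e \<subseteq> - T"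
  proof
    fix z assume "z \<in> P - Y"
    then have "z \<in> - T" using T PX by auto
    then show "\<exists>e>0. ball z e \<subseteq> - T"
      using T(1) open_contains_ball by blast
  qed
  then obtain ee where ee: "\<And>z. z \<in> P - Y \<Longrightarrow> ee z > 0 \<and> ball z (ee z) \<subseteq> - T"
    by metis
  have bp: "basept \<notin> P" using basept_notin nc PX by blast
  define E where "E = insert b ((\<lambda>(z,w). dist z w / 3) ` {(z,w). z\<in>P \<and> w\<in>P \<and> z\<noteq>w}
      \<union> (\<lambda>z. dist z basept / 2) ` P \<union> (\<lambda>z. ee z / 2) ` (P - Y))"
  have "finite {(z,w). z\<in>P \<and> w\<in>P \<and> z\<noteq>w}"
    by (rule finite_subset[of _ "P \<times> P"]) (use fin in auto)
  then have finE: "finite E" unfolding E_def using fin by auto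
  define d where "d = Min E"
  have "d \<in> E" unfolding d_def using finE E_def by (intro Min_in) auto
  moreover have "\<forall>x\<in>E. x > 0" unfolding E_def using b ee bp by auto
  ultimately have d0: "d > 0" by blast
  have dle: "\<And>x. x \<in> E \<Longrightarrow> d \<le> x" unfolding d_def using finE by auto
  have db: "d \<le> b" by (rule dle) (simp add: E_def)
  have d1: "d \<le> dist z w / 3" if "z \<in> P" "w \<in> P" "z \<noteq> w" for z w
    by (rule dle) (use that in \<open>auto simp: E_def\<close>)
  have d2: "d \<le> dist z basept / 2" if "z \<in> P" for z
    by (rule dle) (use that in \<open>auto simp: E_def\<close>)
  have d3: "d \<le> ee z / 2" if "z \<in> P - Y" for z
    by (rule dle) (use that in \<open>auto simp: E_def\<close>)
  have "adapted Y P (\<lambda>z. ball z d)"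
    unfolding adapted_def
  proof (intro conjI ballI impI)
    fix z assume z: "z \<in> P"
    show "convex (ball z d)" "semialgebraic (ball z d)" "open (ball z d)"
      using d0 semialg_ball by auto
    show "basept \<notin> closure (ball z d)" using d0 d2[OF z] bp z
      by (auto simp: closure_ball dist_commute)
    show "compact (closure (ball z d))" by simp
    show "ball z d \<inter> P = {z}" using d0 d1 z
      by (auto simp: dist_commute) (smt (verit) d1 zero_less_dist_iff dist_commute)
    assume "z \<notin> Y"
    then have "ball z (ee z) \<subseteq> - T" "ee z > 0" using ee z by auto
    moreover have "cball z d \<subseteq> ball z (ee z)"
    proof -
      have "d \<le> ee z / 2" "ee z > 0" using d3 z \<open>z \<notin> Y\<close> ee by auto
      then show ?thesis by (auto simp: subset_iff)
    qed
    ultimately show "closure (ball z d) \<inter> Y = {}" using T d0 by (auto simp: closure_ball)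
  next
    fix z w assume "z \<in> P" "w \<in> P" "z \<noteq> w"
    then have "d \<le> dist z w / 3" "dist z w > 0" using d1 by auto
    then show "closure (ball z d) \<inter> closure (ball w d) = {}" using d0
      by (auto simp: closure_ball) (smt (verit) dist_triangle dist_commute)
  qed
  then show ?thesis using d0 db by blast
qed

lemma reassoc:
  assumes "path a" "path b" "path c" "path_image a \<subseteq> S" "path_image b \<subseteq> S" "path_image c \<subseteq> S"
    "pathfinish a = pathstart b" "pathfinish b = pathstart c" "pathfinish c = pathstart c"
  shows "homotopic_paths S (a +++ ((b +++ (c +++ reversepath b)) +++ reversepath a))
                            ((a +++ b) +++ (c +++ reversepath (a +++ b)))"
proof -
  have rb: "reversepath (a +++ b) = reversepath b +++ reversepath a"
    using assms by (simp add: reversepath_joinpaths)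
  have i1: "path_image (reversepath b) \<subseteq> S" "path_image (reversepath a) \<subseteq> S" using assms by auto
  have s1: "homotopic_paths S ((b +++ (c +++ reversepath b)) +++ reversepath a)
                              (b +++ ((c +++ reversepath b) +++ reversepath a))"
    by (rule homotopic_paths_sym, rule homotopic_paths_assoc)
       (use assms i1 in \<open>auto simp: path_image_join\<close>)
  have s2: "homotopic_paths S ((c +++ reversepath b) +++ reversepath a)
                              (c +++ (reversepath b +++ reversepath a))"
    by (rule homotopic_paths_sym, rule homotopic_paths_assoc)
       (use assms i1 in \<open>auto simp: path_image_join\<close>)
  have s3: "homotopic_paths S (a +++ (b +++ (c +++ (reversepath b +++ reversepath a))))
                              ((a +++ b) +++ (c +++ (reversepath b +++ reversepath a)))"
    by (rule homotopic_paths_assoc)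
       (use assms i1 in \<open>auto simp: path_image_join\<close>)
  have "homotopic_paths S (a +++ ((b +++ (c +++ reversepath b)) +++ reversepath a))
                          (a +++ (b +++ ((c +++ reversepath b) +++ reversepath a)))"
    by (rule homotopic_paths_join[OF _ s1]) (use assms in auto)
  also have "homotopic_paths S \<dots> (a +++ (b +++ (c +++ (reversepath b +++ reversepath a))))"
    by (rule homotopic_paths_join, simp add: assms, rule homotopic_paths_join[OF _ s2])
       (use assms in auto)
  also note s3
  finally show ?thesis by (simp add: rb)
qed

lemma radius_below:
  assumes "compact K" "K \<subseteq> ball (z::complex) d" "K \<noteq> {}"
  shows "\<exists>R. 0 < R \<and> R < d \<and> K \<subseteq> cball z R"
proof -
  have "compact (dist z ` K)"
    by (intro compact_continuous_image continuous_intros assms)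
  then obtain m where m: "m \<in> dist z ` K" "\<forall>t\<in>dist z ` K. t \<le> m"
    using compact_attains_sup assms(3) by (metis image_is_empty)
  then have "m < d" using assms by auto
  moreover have "d > 0"
  proof -
    obtain k where "k \<in> K" using assms(3) by blast
    then have "dist z k < d" using assms by auto
    then show ?thesis by (smt (verit) zero_le_dist)
  qed
  ultimately show ?thesis using m
    by (rule_tac x="max m (d/2)" in exI) auto
qed

lemma retract_homotopy:
  assumes h: "homotopic_paths (-{z::complex}) p q" and pb: "path_image p \<subseteq> ball z d"
    and qb: "path_image q \<subseteq> ball z d"
  shows "homotopic_paths (ball z d - {z}) p q"
proof -
  have pq: "path p" "path q" "path_image p \<subseteq> -{z}" "path_image q \<subseteq> -{z}"
    using homotopic_paths_imp_path homotopic_paths_imp_subset h by blast+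
  obtain R where R: "0 < R" "R < d" "path_image p \<union> path_image q \<subseteq> cball z R"
    using radius_below[of "path_image p \<union> path_image q" z d] pb qb pq
    by (auto simp: compact_path_image path_image_nonempty)
  define f where "f w = z + of_real (R / max R (cmod (w - z))) * (w - z)" for w
  have cf: "continuous_on (-{z}) f"
    unfolding f_def using R(1) by (intro continuous_intros) auto
  have fm: "f \<in> (-{z}) \<rightarrow> ball z d - {z}"
  proof
    fix w assume w: "w \<in> - {z}"
    have "cmod (f w - z) = R / max R (cmod (w - z)) * cmod (w - z)"
      unfolding f_def using R(1) by (simp add: norm_mult abs_of_pos del: of_real_divide)
    also have "\<dots> \<le> R" using R(1)
      by (simp add: divide_le_eq max_def mult.commute mult_left_mono)
    finally have "cmod (f w - z) < d" using R by linarith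
    moreover have "f w \<noteq> z" using w R(1) unfolding f_def
      by (auto simp: max_def)
    ultimately show "f w \<in> ball z d - {z}" by (simp add: dist_norm norm_minus_commute)
  qed
  have fid: "f w = w" if "w \<in> cball z R" for w
  proof -
    have "cmod (w - z) \<le> R" using that by (simp add: dist_norm norm_minus_commute)
    then show ?thesis unfolding f_def using R(1) by (simp add: max_def)
  qed
  have hf: "homotopic_paths (ball z d - {z}) (f \<circ> p) (f \<circ> q)"
    by (rule homotopic_paths_continuous_image[OF h cf fm])
  have S: "path_image p \<subseteq> ball z d - {z}" "path_image q \<subseteq> ball z d - {z}"
    using pb qb pq by auto
  have "homotopic_paths (ball z d - {z}) p (f \<circ> p)"
    by (rule homotopic_paths_eq[OF pq(1) S(1)])
       (use R(3) fid in \<open>force simp: path_image_def\<close>)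
  moreover have "homotopic_paths (ball z d - {z}) q (f \<circ> q)"
    by (rule homotopic_paths_eq[OF pq(2) S(2)])
       (use R(3) fid in \<open>force simp: path_image_def\<close>)
  ultimately show ?thesis using hf
    by (meson homotopic_paths_sym homotopic_paths_trans)
qed

lemma const_loop_eq: "const_loop = linepath basept basept"
  by (simp add: const_loop_def linepath_refl)

lemma cw_class:
  fixes P :: "complex set"
  assumes z: "z \<in> P" and bd: "ball z d \<inter> P = {z}" and d: "d > 0"
    and cw: "cw_scc \<gamma>" and gi: "path_image \<gamma> \<subseteq> ball z d - P"
    and ap: "path \<alpha>" and ai: "path_image \<alpha> \<subseteq> -P" and as: "pathstart \<alpha> = basept"
    and af: "pathfinish \<alpha> = pathstart \<gamma>"
  shows "homotopic_paths (-P) (\<alpha> +++ \<gamma> +++ reversepath \<alpha>) const_loop \<or>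
    (\<exists>\<alpha>' \<rho>. 0 < \<rho> \<and> cball z \<rho> \<inter> P = {z} \<and> path \<alpha>' \<and> path_image \<alpha>' \<subseteq> -P \<and>
       pathstart \<alpha>' = basept \<and> pathfinish \<alpha>' = z + of_real \<rho> \<and>
       homotopic_paths (-P) (\<alpha> +++ \<gamma> +++ reversepath \<alpha>) (\<alpha>' +++ reversepath (circlepath z \<rho>) +++ reversepath \<alpha>'))"
proof -
  have gp: "path \<gamma>" and gl: "pathfinish \<gamma> = pathstart \<gamma>"
    using cw by (auto simp: cw_scc_def simple_path_imp_path)
  have zg: "z \<notin> path_image \<gamma>" using gi z by auto
  have Bsub: "ball z d - {z} \<subseteq> -P" using bd by auto
  define s where "s = pathstart \<gamma>"
  have sB: "s \<in> ball z d - {z}" using gi zg pathstart_in_path_image[of \<gamma>] unfolding s_def by auto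
  have gB: "path_image \<gamma> \<subseteq> ball z d" using gi by auto
  have gP: "path_image \<gamma> \<subseteq> -P" using gi by auto
  have rai: "path_image (reversepath \<alpha>) \<subseteq> -P" using ai by simp
  show ?thesis
  proof (cases "z \<in> inside (path_image \<gamma>)")
    case True
    then have wg: "winding_number \<gamma> z = -1" using cw by (auto simp: cw_scc_def)
    define \<rho> where "\<rho> = d / 2"
    have \<rho>: "0 < \<rho>" "\<rho> < d" using d by (auto simp: \<rho>_def)
    have zr: "z + of_real \<rho> \<in> ball z d - {z}" using \<rho> by (auto simp: dist_norm)
    obtain \<beta> where \<beta>: "path \<beta>" "path_image \<beta> \<subseteq> ball z d - {z}" "pathstart \<beta> = s"
      "pathfinish \<beta> = z + of_real \<rho>"
      using path_connected_punctured_ball[of z d] sB zr unfolding path_connected_def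
      by (metis DIM_complex order_refl)
    define c where "c = reversepath (circlepath z \<rho>)"
    have c: "path c" "path_image c = sphere z \<rho>" "pathstart c = z + of_real \<rho>"
      "pathfinish c = z + of_real \<rho>" using \<rho> by (auto simp: c_def)
    have cB: "path_image c \<subseteq> ball z d - {z}" using c(2) \<rho> by (auto simp: dist_norm)
    define L where "L = \<beta> +++ c +++ reversepath \<beta>"
    have Lp: "path L" using \<beta> c by (simp add: L_def)
    have LB: "path_image L \<subseteq> ball z d - {z}" unfolding L_def
      using \<beta> cB by (intro subset_path_image_join) auto
    have Ls: "pathstart L = s" "pathfinish L = s" using \<beta> c by (auto simp: L_def)
    have zb: "z \<notin> path_image \<beta>" "z \<notin> path_image c" using \<beta> cB by auto
    have wc: "winding_number c z = -1"
      using \<rho> by (simp add: c_def winding_number_reversepath winding_number_circlepath_centre)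
    have "winding_number L z = winding_number \<beta> z + (winding_number c z + winding_number (reversepath \<beta>) z)"
      unfolding L_def using \<beta> c zb
      by (simp add: winding_number_join not_in_path_image_join)
    also have "\<dots> = -1" using wc \<beta> zb by (simp add: winding_number_reversepath)
    finally have wL: "winding_number L z = -1" .
    have "homotopic_paths (-{z}) \<gamma> L"
      using winding_number_homotopic_paths_eq[of \<gamma> z L] gp zg Lp LB Ls wg wL gl s_def by auto
    then have "homotopic_paths (ball z d - {z}) \<gamma> L"
      by (rule retract_homotopy) (use gB LB in auto)
    then have hgL: "homotopic_paths (-P) \<gamma> L" using Bsub homotopic_paths_subset by blast
    have "homotopic_paths (-P) (\<alpha> +++ \<gamma> +++ reversepath \<alpha>) (\<alpha> +++ L +++ reversepath \<alpha>)"
      by (intro homotopic_paths_join hgL) (use ap ai af gl Ls s_def in auto)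
    also have "homotopic_paths (-P) (\<alpha> +++ L +++ reversepath \<alpha>)
        ((\<alpha> +++ \<beta>) +++ (c +++ reversepath (\<alpha> +++ \<beta>)))"
      unfolding L_def
      by (rule reassoc) (use ap ai \<beta> c cB Bsub af s_def in auto)
    finally have H: "homotopic_paths (-P) (\<alpha> +++ \<gamma> +++ reversepath \<alpha>)
        ((\<alpha> +++ \<beta>) +++ (c +++ reversepath (\<alpha> +++ \<beta>)))" .
    have "cball z \<rho> \<subseteq> ball z d" using \<rho> by (simp add: subset_eq)
    then have cb: "cball z \<rho> \<inter> P = {z}" using bd \<rho> z by auto
    have ab: "path (\<alpha> +++ \<beta>)" "path_image (\<alpha> +++ \<beta>) \<subseteq> -P"
      using ap \<beta> af s_def ai Bsub by (auto simp: path_image_join)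
    have "pathstart (\<alpha> +++ \<beta>) = basept" "pathfinish (\<alpha> +++ \<beta>) = z + of_real \<rho>"
      using as \<beta> by auto
    then show ?thesis using H \<rho> cb ab unfolding c_def by blast
  next
    case False
    then have "z \<in> outside (path_image \<gamma>)" using zg inside_Un_outside by blast
    then have "winding_number \<gamma> z = 0" using winding_number_zero_in_outside gp gl by blast
    then have "homotopic_paths (-{z}) \<gamma> (linepath s s)"
      using winding_number_homotopic_paths_null_explicit_eq[OF gp zg] s_def by simp
    then have "homotopic_paths (ball z d - {z}) \<gamma> (linepath s s)"
      by (rule retract_homotopy) (use gB sB in auto)
    then have hg: "homotopic_paths (-P) \<gamma> (linepath s s)" using Bsub homotopic_paths_subset by blast
    have "homotopic_paths (-P) (\<alpha> +++ \<gamma> +++ reversepath \<alpha>) (\<alpha> +++ linepath s s +++ reversepath \<alpha>)"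
      by (intro homotopic_paths_join hg) (use ap ai af gl s_def in auto)
    also have "homotopic_paths (-P) (\<alpha> +++ linepath s s +++ reversepath \<alpha>) (\<alpha> +++ reversepath \<alpha>)"
      by (intro homotopic_paths_join homotopic_paths_lid') (use ap ai af s_def in auto)
    also have "homotopic_paths (-P) (\<alpha> +++ reversepath \<alpha>) const_loop"
      unfolding const_loop_eq using homotopic_paths_rinv[OF ap ai] as by simp
    finally show ?thesis by blast
  qed
qed

lemma lclass_eq: "homotopic_paths (-P) a b \<Longrightarrow> lclass P a = lclass P b"
  unfolding lclass_def by (auto intro: homotopic_paths_trans homotopic_paths_sym)

lemma in_lclass: "path a \<Longrightarrow> path_image a \<subseteq> -P \<Longrightarrow> a \<in> lclass P a"
  unfolding lclass_def by simp

lemma lclass_eqD: "lclass P a = lclass P b \<Longrightarrow> path a \<Longrightarrow> path_image a \<subseteq> -P \<Longrightarrow> homotopic_paths (-P) b a"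
  using in_lclass[of a P] unfolding lclass_def by auto

lemma foldl_None: "foldl (\<lambda>acc a. Option.bind acc (\<lambda>x. pmul D pprod x a)) None xs = None"
  by (induction xs) auto

lemma listprod_Nil: "pmq_listprod unit1 D pprod [] = Some unit1"
  by (simp add: pmq_listprod_def)

lemma pmq_unit: "pmq Q unit1 cj D pprod \<Longrightarrow> unit1 \<in> Q"
  unfolding pmq_def by (elim conjE)

lemma pmq_prodQ: "pmq Q unit1 cj D pprod \<Longrightarrow> (a, b) \<in> D \<Longrightarrow> pprod a b \<in> Q"
proof -
  assume "pmq Q unit1 cj D pprod" "(a, b) \<in> D"
  moreover have "\<forall>(a,b)\<in>D. pprod a b \<in> Q" using calculation(1) unfolding pmq_def by (elim conjE)
  ultimately show ?thesis by auto
qed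

lemma pmq_unitl: "pmq Q unit1 cj D pprod \<Longrightarrow> a \<in> Q \<Longrightarrow> (unit1, a) \<in> D \<and> pprod unit1 a = a"
proof -
  assume "pmq Q unit1 cj D pprod" "a \<in> Q"
  moreover have "\<forall>a\<in>Q. (a, unit1) \<in> D \<and> (unit1, a) \<in> D \<and> pprod a unit1 = a \<and> pprod unit1 a = a"
    using calculation(1) unfolding pmq_def by (elim conjE)
  ultimately show ?thesis by auto
qed

lemma listprod_single: "pmq Q unit1 cj D pprod \<Longrightarrow> a \<in> Q \<Longrightarrow> pmq_listprod unit1 D pprod [a] = Some a"
  using pmq_unitl[of Q unit1 cj D pprod a] by (simp add: pmq_listprod_def pmul_def)

lemma foldl_aug:
  assumes pmq: "pmq Q unit1 cj D pprod" and aug: "pmq_augmented Q unit1 D pprod"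
  shows "a \<in> Q \<Longrightarrow> set xs \<subseteq> Q \<Longrightarrow>
    foldl (\<lambda>acc a. Option.bind acc (\<lambda>x. pmul D pprod x a)) (Some a) xs = Some unit1 \<Longrightarrow>
    a = unit1 \<and> (\<forall>x\<in>set xs. x = unit1)"
proof (induction xs arbitrary: a)
  case Nil
  then show ?case by simp
next
  case (Cons x xs)
  show ?case
  proof (cases "(a, x) \<in> D")
    case True
    have "pprod a x \<in> Q" using pmq True by (rule pmq_prodQ)
    moreover have "foldl (\<lambda>acc a. Option.bind acc (\<lambda>x. pmul D pprod x a)) (Some (pprod a x)) xs = Some unit1"
      using Cons.prems True by (simp add: pmul_def)
    ultimately have "pprod a x = unit1 \<and> (\<forall>x\<in>set xs. x = unit1)"
      using Cons.IH Cons.prems by auto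
    moreover have "a = unit1 \<and> x = unit1"
      using aug True Cons.prems calculation unfolding pmq_augmented_def by (metis insert_subset list.set(2))
    ultimately show ?thesis by auto
  next
    case False
    then show ?thesis using Cons.prems foldl_None[of D pprod xs] by (simp add: pmul_def)
  qed
qed

lemma listprod_aug:
  assumes "pmq Q unit1 cj D pprod" "pmq_augmented Q unit1 D pprod"
    "set xs \<subseteq> Q" "pmq_listprod unit1 D pprod xs = Some unit1"
  shows "\<forall>x\<in>set xs. x = unit1"
  using foldl_aug[OF assms(1,2), of unit1 xs] assms pmq_unit[OF assms(1)] unfolding pmq_listprod_def by blast

lemma const_loop_path: "path const_loop" "path_image const_loop = {basept}"
  "pathstart const_loop = basept" "pathfinish const_loop = basept"
  by (auto simp: const_loop_eq)

lemma joinlist_start: "pathstart (joinlist \<gamma>s) = basept" if "\<forall>\<gamma>\<in>set \<gamma>s. pathstart \<gamma> = basept"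
  using that by (induction \<gamma>s) (auto simp: joinlist_def const_loop_path)

lemma joinlist_null:
  assumes "basept \<notin> P" "\<forall>\<gamma>\<in>set \<gamma>s. is_loop P \<gamma> \<and> homotopic_paths (-P) \<gamma> const_loop"
  shows "homotopic_paths (-P) (joinlist \<gamma>s) const_loop"
  using assms(2)
proof (induction \<gamma>s)
  case Nil
  have "path const_loop" "path_image const_loop \<subseteq> -P" using assms(1) const_loop_path by auto
  then show ?case unfolding joinlist_def by simp
next
  case (Cons \<gamma> \<gamma>s)
  have j: "joinlist (\<gamma> # \<gamma>s) = \<gamma> +++ joinlist \<gamma>s" by (simp add: joinlist_def)
  have st: "pathstart (joinlist \<gamma>s) = basept"
    using Cons.prems by (intro joinlist_start) (auto simp: is_loop_def)
  have h1: "homotopic_paths (-P) \<gamma> const_loop" and h2: "homotopic_paths (-P) (joinlist \<gamma>s) const_loop"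
    and gf: "pathfinish \<gamma> = basept"
    using Cons by (auto simp: is_loop_def)
  have "homotopic_paths (-P) (\<gamma> +++ joinlist \<gamma>s) (const_loop +++ const_loop)"
    using h1 h2 gf st by (intro homotopic_paths_join) simp_all
  also have "homotopic_paths (-P) (const_loop +++ const_loop) const_loop"
  proof -
    have "path const_loop" "path_image const_loop \<subseteq> -P" using assms(1) const_loop_path by auto
    from homotopic_paths_lid[OF this] show ?thesis by (simp add: const_loop_path(3) const_loop_eq)
  qed
  finally show ?case by (simp add: j)
qed

lemma ext_single:
  assumes "pmq Q unit1 cj D pprod" "is_loop P \<gamma>" "lclass P \<gamma> \<in> QP Y P" "\<psi> (lclass P \<gamma>) \<in> Q"
  shows "ext_val unit1 D pprod Y P \<psi> (lclass P \<gamma>) (\<psi> (lclass P \<gamma>))"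
proof -
  have p: "path \<gamma>" "path_image \<gamma> \<subseteq> -P" "pathfinish \<gamma> = basept" using assms(2) by (auto simp: is_loop_def)
  have "homotopic_paths (-P) (\<gamma> +++ const_loop) \<gamma>"
    using homotopic_paths_rid[OF p(1,2)] p(3) by (simp add: const_loop_eq)
  then have "lclass P \<gamma> = lclass P (joinlist [\<gamma>])"
    unfolding joinlist_def by (simp add: lclass_eq homotopic_paths_sym)
  moreover have "pmq_listprod unit1 D pprod (map (\<lambda>\<gamma>. \<psi> (lclass P \<gamma>)) [\<gamma>]) = Some (\<psi> (lclass P \<gamma>))"
    using listprod_single[OF assms(1) assms(4)] by simp
  ultimately show ?thesis unfolding ext_val_def using assms(2,3)
    by (intro exI[of _ "[\<gamma>]"]) simp
qed

lemma lasso_loop: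
  assumes "0 < \<rho>" "cball z \<rho> \<inter> P = {z}" "path \<alpha>" "path_image \<alpha> \<subseteq> -P"
    "pathstart \<alpha> = basept" "pathfinish \<alpha> = z + of_real \<rho>"
  shows "is_loop P (\<alpha> +++ reversepath (circlepath z \<rho>) +++ reversepath \<alpha>)"
    "path_image (\<alpha> +++ reversepath (circlepath z \<rho>) +++ reversepath \<alpha>) = path_image \<alpha> \<union> sphere z \<rho>"
proof -
  have sp: "sphere z \<rho> \<subseteq> -P"
  proof
    fix w assume w: "w \<in> sphere z \<rho>"
    show "w \<in> -P"
    proof
      assume "w \<in> P"
      moreover have "w \<in> cball z \<rho>" using w by simp
      ultimately have "w = z" using assms(2) by blast
      then show False using w assms(1) by simp
    qed
  qed
  have e1: "path_image (reversepath (circlepath z \<rho>) +++ reversepath \<alpha>) = sphere z \<rho> \<union> path_image \<alpha>"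
    by (subst path_image_join) (use assms(1,6) in auto)
  have e2: "path_image (\<alpha> +++ reversepath (circlepath z \<rho>) +++ reversepath \<alpha>)
     = path_image \<alpha> \<union> path_image (reversepath (circlepath z \<rho>) +++ reversepath \<alpha>)"
    by (rule path_image_join) (use assms(6) in simp)
  show pi: "path_image (\<alpha> +++ reversepath (circlepath z \<rho>) +++ reversepath \<alpha>) = path_image \<alpha> \<union> sphere z \<rho>"
    unfolding e2 e1 by blast
  have "path (\<alpha> +++ reversepath (circlepath z \<rho>) +++ reversepath \<alpha>)"
    using assms(3,6) by (intro path_join_imp) auto
  moreover have "pathstart (\<alpha> +++ reversepath (circlepath z \<rho>) +++ reversepath \<alpha>) = basept"
    "pathfinish (\<alpha> +++ reversepath (circlepath z \<rho>) +++ reversepath \<alpha>) = basept"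
    using assms(5) by auto
  ultimately show "is_loop P (\<alpha> +++ reversepath (circlepath z \<rho>) +++ reversepath \<alpha>)"
    unfolding is_loop_def pi using assms(4) sp by blast
qed

lemma self_in_nbhd:
  assumes pmq: "pmq Q unit1 cj D pprod"
    and c: "(P, \<psi>, \<phi>) \<in> Hur_set X Y Q unit1 cj G e act"
    and d: "d > 0" and ad: "adapted Y P (\<lambda>z. ball z d)"
  shows "(P, \<psi>, \<phi>) \<in> normal_nbhd X Y Q unit1 cj D pprod G e act (P, \<psi>, \<phi>) (\<lambda>z. ball z d)"
proof -
  have psiQ: "\<forall>x\<in>QP Y P. \<psi> x \<in> Q" using c by (simp add: Hur_set_def)
  have A: "\<forall>z\<in>P. closure (ball z d) \<inter> Y = {} \<longrightarrow>
            (\<forall>\<alpha> \<gamma>. cw_scc \<gamma> \<and> path_image \<gamma> \<subseteq> ball z d - P \<and>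
               path \<alpha> \<and> path_image \<alpha> \<subseteq> - P \<and> pathstart \<alpha> = basept \<and> pathfinish \<alpha> = pathstart \<gamma> \<longrightarrow>
               (\<exists>q. ext_val unit1 D pprod Y P \<psi> (lclass P (\<alpha> +++ \<gamma> +++ reversepath \<alpha>)) q))"
  proof (intro ballI impI allI)
    fix z \<alpha> \<gamma>
    assume z: "z \<in> P" and cY: "closure (ball z d) \<inter> Y = {}"
      and H: "cw_scc \<gamma> \<and> path_image \<gamma> \<subseteq> ball z d - P \<and>
               path \<alpha> \<and> path_image \<alpha> \<subseteq> - P \<and> pathstart \<alpha> = basept \<and> pathfinish \<alpha> = pathstart \<gamma>"
    have "z \<in> closure (ball z d)" using d by simp
    then have zY: "z \<notin> Y" using cY by blast
    have bd: "ball z d \<inter> P = {z}" using ad z unfolding adapted_def by blast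
    from cw_class[OF z bd d, of \<gamma> \<alpha>] H
    consider (triv) "homotopic_paths (-P) (\<alpha> +++ \<gamma> +++ reversepath \<alpha>) const_loop"
      | (lasso) \<alpha>' \<rho> where "0 < \<rho>" "cball z \<rho> \<inter> P = {z}" "path \<alpha>'" "path_image \<alpha>' \<subseteq> -P"
       "pathstart \<alpha>' = basept" "pathfinish \<alpha>' = z + of_real \<rho>"
       "homotopic_paths (-P) (\<alpha> +++ \<gamma> +++ reversepath \<alpha>) (\<alpha>' +++ reversepath (circlepath z \<rho>) +++ reversepath \<alpha>')"
      by blast
    then show "\<exists>q. ext_val unit1 D pprod Y P \<psi> (lclass P (\<alpha> +++ \<gamma> +++ reversepath \<alpha>)) q"
    proof cases
      case triv
      then have "lclass P (\<alpha> +++ \<gamma> +++ reversepath \<alpha>) = lclass P (joinlist [])"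
        by (simp add: joinlist_def lclass_eq)
      then have "ext_val unit1 D pprod Y P \<psi> (lclass P (\<alpha> +++ \<gamma> +++ reversepath \<alpha>)) unit1"
        unfolding ext_val_def by (intro exI[of _ "[]"]) (simp add: listprod_Nil)
      then show ?thesis by blast
    next
      case lasso
      define l where "l = \<alpha>' +++ reversepath (circlepath z \<rho>) +++ reversepath \<alpha>'"
      have il: "is_loop P l" unfolding l_def by (rule lasso_loop(1)) (use lasso in auto)
      have "lclass P l \<in> QP Y P" unfolding QP_def l_def
        using lasso z zY by blast
      then have "ext_val unit1 D pprod Y P \<psi> (lclass P l) (\<psi> (lclass P l))"
        using ext_single[OF pmq il] psiQ by blast
      moreover have "lclass P (\<alpha> +++ \<gamma> +++ reversepath \<alpha>) = lclass P l"
        unfolding l_def using lasso by (simp add: lclass_eq)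
      ultimately show ?thesis by auto
    qed
  qed
  have B: "\<forall>\<gamma>. is_loop P \<gamma> \<and> path_image \<gamma> \<inter> (\<Union>z\<in>P. ball z d) = {} \<and> lclass P \<gamma> \<in> QP Y P \<longrightarrow>
            ext_val unit1 D pprod Y P \<psi> (lclass P \<gamma>) (\<psi> (lclass P \<gamma>))"
    using ext_single[OF pmq] psiQ by blast
  have C: "P \<subseteq> (\<Union>z\<in>P. ball z d)" "\<forall>z\<in>P. P \<inter> ball z d \<noteq> {}" using d by auto
  show ?thesis unfolding normal_nbhd_def using c A B C by simp
qed

lemma bad_nbhd:
  assumes nc: "nice_couple X Y" and pmq: "pmq Q unit1 cj D pprod"
    and aug: "pmq_augmented Q unit1 D pprod"
    and c: "(P, \<psi>, \<phi>) \<in> Hur_set X Y Q unit1 cj G e act"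
    and x: "x \<in> QP Y P" "\<psi> x = unit1" "x \<noteq> lclass P const_loop"
  shows "\<exists>d>0. adapted Y P (\<lambda>z. ball z d) \<and>
     normal_nbhd X Y Q unit1 cj D pprod G e act (P, \<psi>, \<phi>) (\<lambda>z. ball z d) \<inter> Hur_plus_set X Y Q unit1 cj G e act = {}"
proof -
  have fin: "finite P" and PX: "P \<subseteq> X" using c by (simp_all add: Hur_set_def)
  obtain \<alpha> z r where z: "z \<in> P" "z \<notin> Y" and r: "r > 0" and cb: "cball z r \<inter> P = {z}"
    and \<alpha>: "path \<alpha>" "path_image \<alpha> \<subseteq> -P" "pathstart \<alpha> = basept" "pathfinish \<alpha> = z + of_real r"
    and xe: "x = lclass P (\<alpha> +++ reversepath (circlepath z r) +++ reversepath \<alpha>)"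
    using x(1,3) unfolding QP_def by blast
  define l where "l = \<alpha> +++ reversepath (circlepath z r) +++ reversepath \<alpha>"
  have il: "is_loop P l" and K: "path_image l = path_image \<alpha> \<union> sphere z r"
    unfolding l_def using lasso_loop[OF r cb \<alpha>] by auto
  have Kc: "closed (path_image l)" using il
    by (simp add: is_loop_def closed_path_image)
  have Kne: "path_image l \<noteq> {}" by (simp add: path_image_nonempty)
  have KP: "path_image l \<subseteq> -P" using il by (simp add: is_loop_def)
  define b where "b = Min (insert (r/2) ((\<lambda>w. infdist w (path_image l)) ` P))"
  have finb: "finite (insert (r/2) ((\<lambda>w. infdist w (path_image l)) ` P))" using fin by simp
  have "b \<in> insert (r/2) ((\<lambda>w. infdist w (path_image l)) ` P)"
    unfolding b_def using finb by (intro Min_in) auto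
  moreover have "\<forall>y \<in> insert (r/2) ((\<lambda>w. infdist w (path_image l)) ` P). y > 0"
    using r KP Kc Kne infdist_pos_not_in_closed by fastforce
  ultimately have b0: "b > 0" by blast
  have br: "b \<le> r/2" unfolding b_def using finb by (intro Min_le) auto
  have bK: "b \<le> infdist w (path_image l)" if "w \<in> P" for w
    unfolding b_def using finb that by simp
  obtain d where d: "d > 0" "d \<le> b" and ad: "adapted Y P (\<lambda>z. ball z d)"
    using exists_adapted[OF nc fin PX b0] by blast
  have disj: "y \<notin> ball w d" if "y \<in> path_image l" "w \<in> P" for y w
  proof
    assume "y \<in> ball w d"
    then have "dist w y < d" by simp
    moreover have "infdist w (path_image l) \<le> dist w y" using that by (simp add: infdist_le)
    ultimately show False using bK[OF that(2)] d by linarith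
  qed
  have "normal_nbhd X Y Q unit1 cj D pprod G e act (P, \<psi>, \<phi>) (\<lambda>z. ball z d) \<inter> Hur_plus_set X Y Q unit1 cj G e act = {}"
  proof (rule ccontr)
    assume "normal_nbhd X Y Q unit1 cj D pprod G e act (P, \<psi>, \<phi>) (\<lambda>z. ball z d) \<inter> Hur_plus_set X Y Q unit1 cj G e act \<noteq> {}"
    then obtain P' \<psi>' \<phi>' where
      N: "(P', \<psi>', \<phi>') \<in> normal_nbhd X Y Q unit1 cj D pprod G e act (P, \<psi>, \<phi>) (\<lambda>z. ball z d)"
      and Hp: "(P', \<psi>', \<phi>') \<in> Hur_plus_set X Y Q unit1 cj G e act"
      by (metis disjoint_iff prod_cases3)
    have c': "(P', \<psi>', \<phi>') \<in> Hur_set X Y Q unit1 cj G e act"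
      and P'U: "P' \<subseteq> (\<Union>z\<in>P. ball z d)" and P'z: "P' \<inter> ball z d \<noteq> {}"
      and EX: "\<forall>\<gamma>. is_loop P \<gamma> \<and> path_image \<gamma> \<inter> (\<Union>z\<in>P. ball z d) = {} \<and> lclass P \<gamma> \<in> QP Y P \<longrightarrow>
            ext_val unit1 D pprod Y P' \<psi>' (lclass P' \<gamma>) (\<psi> (lclass P \<gamma>))"
      using N z unfolding normal_nbhd_def by auto
    have lU: "path_image l \<inter> (\<Union>z\<in>P. ball z d) = {}" using disj by blast
    have "ext_val unit1 D pprod Y P' \<psi>' (lclass P' l) unit1"
      using EX il lU x xe l_def by metis
    then obtain \<gamma>s where gs: "\<forall>\<gamma>\<in>set \<gamma>s. is_loop P' \<gamma> \<and> lclass P' \<gamma> \<in> QP Y P'"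
      and le: "lclass P' l = lclass P' (joinlist \<gamma>s)"
      and lp: "pmq_listprod unit1 D pprod (map (\<lambda>\<gamma>. \<psi>' (lclass P' \<gamma>)) \<gamma>s) = Some unit1"
      unfolding ext_val_def by blast
    have psiQ': "\<forall>y\<in>QP Y P'. \<psi>' y \<in> Q" and P'X: "P' \<subseteq> X" using c' by (simp_all add: Hur_set_def)
    have "set (map (\<lambda>\<gamma>. \<psi>' (lclass P' \<gamma>)) \<gamma>s) \<subseteq> Q" using gs psiQ' by auto
    then have all1: "\<forall>y\<in>set (map (\<lambda>\<gamma>. \<psi>' (lclass P' \<gamma>)) \<gamma>s). y = unit1"
      using listprod_aug[OF pmq aug _ lp] by blast
    have plus: "\<forall>y\<in>QP Y P'. \<psi>' y = unit1 \<longrightarrow> y = lclass P' const_loop"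
      using Hp by (simp add: Hur_plus_set_def)
    have bP': "basept \<notin> P'" using basept_notin[OF nc P'X] .
    have "\<forall>\<gamma>\<in>set \<gamma>s. is_loop P' \<gamma> \<and> homotopic_paths (-P') \<gamma> const_loop"
    proof
      fix \<gamma> assume g: "\<gamma> \<in> set \<gamma>s"
      then have "lclass P' \<gamma> = lclass P' const_loop" using gs all1 plus by auto
      moreover have "path \<gamma>" "path_image \<gamma> \<subseteq> -P'" using gs g by (auto simp: is_loop_def)
      ultimately have "homotopic_paths (-P') const_loop \<gamma>" by (rule lclass_eqD)
      then show "is_loop P' \<gamma> \<and> homotopic_paths (-P') \<gamma> const_loop"
        using gs g homotopic_paths_sym by blast
    qed
    then have jn: "homotopic_paths (-P') (joinlist \<gamma>s) const_loop" using joinlist_null[OF bP'] by blast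
    have lP': "path_image l \<subseteq> -P'" using P'U lU by blast
    have lpath: "path l" using il by (simp add: is_loop_def)
    have "homotopic_paths (-P') (joinlist \<gamma>s) l" using lclass_eqD[OF le lpath lP'] .
    then have hl: "homotopic_paths (-P') l const_loop" using jn homotopic_paths_sym homotopic_paths_trans by blast
    obtain p where p: "p \<in> P'" "p \<in> ball z d" using P'z by blast
    have "homotopic_paths (-{p}) l const_loop" using hl p(1) homotopic_paths_subset by blast
    then have "winding_number l p = winding_number const_loop p" by (rule winding_number_homotopic_paths)
    also have "\<dots> = 0"
    proof -
      have "p \<noteq> basept" using p(1) bP' by blast
      then show ?thesis unfolding const_loop_eq by (rule winding_number_trivial)
    qed
    finally have w0: "winding_number l p = 0" .
    have pK: "p \<notin> path_image l" using disj[OF _ z(1)] p(2) by blast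
    then have pa: "p \<notin> path_image \<alpha>" and ps: "p \<notin> sphere z r" using K by auto
    have pz: "norm (p - z) < r" using p(2) d br r by (simp add: dist_norm norm_minus_commute)
    have "winding_number l p = winding_number \<alpha> p + (winding_number (reversepath (circlepath z r)) p
           + winding_number (reversepath \<alpha>) p)"
      unfolding l_def using \<alpha> pa ps r
      by (simp add: winding_number_join not_in_path_image_join)
    also have "\<dots> = -1"
    proof -
      have "p \<notin> path_image (circlepath z r)" using ps r by simp
      then have "winding_number (reversepath (circlepath z r)) p = - winding_number (circlepath z r) p"
        by (simp add: winding_number_reversepath)
      also have "\<dots> = -1" using winding_number_circlepath[OF pz] by simp
      finally show ?thesis using \<alpha> pa by (simp add: winding_number_reversepath)
    qed
    finally show False using w0 by simp
  qed
  then show ?thesis using d ad by blast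
qed

lemma nbhd_sub: "normal_nbhd X Y Q unit1 cj D pprod G e act c U \<subseteq> Hur_set X Y Q unit1 cj G e act"
  unfolding normal_nbhd_def by (cases c) auto

theorem lemma7p2:
  fixes X Y :: "complex set"
    and Q :: "'q set" and unit1 :: 'q and cj :: "'q \<Rightarrow> 'q \<Rightarrow> 'q"
    and D :: "('q \<times> 'q) set" and pprod :: "'q \<Rightarrow> 'q \<Rightarrow> 'q"
    and G :: "('g, 'm) monoid_scheme" and e :: "'q \<Rightarrow> 'g" and act :: "'q \<Rightarrow> 'g \<Rightarrow> 'q"
  assumes "nice_couple X Y"
    and "pmq_group_pair Q unit1 cj D pprod G e act"
    and "pmq_augmented Q unit1 D pprod"
  shows "closedin (Hur_top X Y Q unit1 cj D pprod G e act) (Hur_plus_set X Y Q unit1 cj G e act)"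
proof -
  have pmq: "pmq Q unit1 cj D pprod" using assms(2) unfolding pmq_group_pair_def by (elim conjE)
  define H where "H = Hur_set X Y Q unit1 cj G e act"
  define Gs where "Gs = {normal_nbhd X Y Q unit1 cj D pprod G e act c U | c U.
          c \<in> Hur_set X Y Q unit1 cj G e act \<and> adapted Y (fst c) U}"
  have T: "Hur_top X Y Q unit1 cj D pprod G e act = topology_generated_by Gs"
    unfolding Hur_top_def Gs_def ..
  have mem: "\<exists>d>0. adapted Y P (\<lambda>z. ball z d) \<and>
      (P, \<psi>, \<phi>) \<in> normal_nbhd X Y Q unit1 cj D pprod G e act (P, \<psi>, \<phi>) (\<lambda>z. ball z d)"
    if c: "(P, \<psi>, \<phi>) \<in> H" for P \<psi> \<phi>
  proof -
    have "finite P" "P \<subseteq> X" using c by (simp_all add: H_def Hur_set_def)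
    then obtain d where "d > 0" "adapted Y P (\<lambda>z. ball z d)"
      using exists_adapted[OF assms(1)] by (metis zero_less_one)
    then show ?thesis using self_in_nbhd[OF pmq c[unfolded H_def]] by blast
  qed
  have top: "topspace (Hur_top X Y Q unit1 cj D pprod G e act) = H"
  proof -
    have "\<Union>Gs \<subseteq> H" unfolding Gs_def H_def using nbhd_sub by fastforce
    moreover have "H \<subseteq> \<Union>Gs"
    proof
      fix c assume "c \<in> H"
      moreover obtain P \<psi> \<phi> where cc: "c = (P, \<psi>, \<phi>)" by (cases c)
      ultimately obtain d where "d > 0" "adapted Y P (\<lambda>z. ball z d)"
        "c \<in> normal_nbhd X Y Q unit1 cj D pprod G e act c (\<lambda>z. ball z d)"
        using mem by blast
      moreover have "normal_nbhd X Y Q unit1 cj D pprod G e act c (\<lambda>z. ball z d) \<in> Gs"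
        unfolding Gs_def using \<open>c \<in> H\<close> cc H_def calculation(2) by auto
      ultimately show "c \<in> \<Union>Gs" by blast
    qed
    ultimately show ?thesis unfolding T by simp
  qed
  have sub: "Hur_plus_set X Y Q unit1 cj G e act \<subseteq> H"
    unfolding Hur_plus_set_def H_def by auto
  have "openin (Hur_top X Y Q unit1 cj D pprod G e act) (H - Hur_plus_set X Y Q unit1 cj G e act)"
  proof (subst openin_subopen, intro ballI)
    fix c assume c: "c \<in> H - Hur_plus_set X Y Q unit1 cj G e act"
    obtain P \<psi> \<phi> where cc: "c = (P, \<psi>, \<phi>)" by (cases c)
    have cH: "(P, \<psi>, \<phi>) \<in> Hur_set X Y Q unit1 cj G e act" using c cc H_def by simp
    obtain x where x: "x \<in> QP Y P" "\<psi> x = unit1" "x \<noteq> lclass P const_loop"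
      using c cc unfolding Hur_plus_set_def H_def by auto
    obtain d where d: "d > 0" "adapted Y P (\<lambda>z. ball z d)"
      and dis: "normal_nbhd X Y Q unit1 cj D pprod G e act (P, \<psi>, \<phi>) (\<lambda>z. ball z d) \<inter> Hur_plus_set X Y Q unit1 cj G e act = {}"
      using bad_nbhd[OF assms(1) pmq assms(3) cH x] by blast
    let ?N = "normal_nbhd X Y Q unit1 cj D pprod G e act (P, \<psi>, \<phi>) (\<lambda>z. ball z d)"
    have "?N \<in> Gs" unfolding Gs_def using cH d by auto
    then have "openin (Hur_top X Y Q unit1 cj D pprod G e act) ?N"
      unfolding T by (rule topology_generated_by_Basis)
    moreover have "c \<in> ?N" using self_in_nbhd[OF pmq cH d] cc by simp
    moreover have "?N \<subseteq> H - Hur_plus_set X Y Q unit1 cj G e act"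
      using nbhd_sub[of X Y Q unit1 cj D pprod G e act "(P, \<psi>, \<phi>)" "\<lambda>z. ball z d"] dis H_def by blast
    ultimately show "\<exists>T. openin (Hur_top X Y Q unit1 cj D pprod G e act) T \<and> c \<in> T \<and>
        T \<subseteq> H - Hur_plus_set X Y Q unit1 cj G e act" by blast
  qed
  then show ?thesis unfolding closedin_def top using sub by simp
qed

end
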